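(* Let $Q$ be a finite quiver with arrow set $Q_1$, connected, without loops or $2$-cycles, every vertex being the source of exactly two arrows and the target of exactly two arrows, equipped with bijections $f,g:Q_1\to Q_1$ such that for each $\alpha$, $\{f(\alpha),g(\alpha)\}$ is the set of the two arrows starting at the target of $\alpha$, and $f^3=\mathrm{id}$. Assume $g^3=\mathrm{id}$ (i.e. every $g$-orbit has size $3$). Then $Q$ is isomorphic to the adjacency quiver of the ideal triangulation of the sphere with $4$ punctures given by the six edges of a tetrahedron; in particular $Q$ has $6$ vertices, $12$ arrows and $4$ $g$-orbits. Moreover, for every $\alpha\in Q_1$ the arrows $\alpha$, $\bar\alpha$, $f(\alpha)$, $f(\bar\alpha)$ lie in four pairwise different $g$-orbits.
   Context: $\bar\alpha$ denotes the other arrow with the same source as $\alpha$. The adjacency quiver of an ideal triangulation has the arcs as vertices and an arrow $i\to j$ for each puncture $p$ and each occurrence of arcs $i,j$ at $p$ with $j$ immediately following $i$ in the counterclockwise order around $p$. The tetrahedron triangulation has the four vertices of a tetrahedron (on the sphere) as punctures, its six edges as arcs and its four faces as triangles. *)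

theory Defs
  imports Main
begin

definition quiver :: "'v set \<Rightarrow> 'a set \<Rightarrow> ('a \<Rightarrow> 'v) \<Rightarrow> ('a \<Rightarrow> 'v) \<Rightarrow> bool" where
  "quiver V A s t \<longleftrightarrow> (\<forall>\<alpha>\<in>A. s \<alpha> \<in> V \<and> t \<alpha> \<in> V)"

definition quiver_connected :: "'v set \<Rightarrow> 'a set \<Rightarrow> ('a \<Rightarrow> 'v) \<Rightarrow> ('a \<Rightarrow> 'v) \<Rightarrow> bool" where
  "quiver_connected V A s t \<longleftrightarrow> V \<noteq> {} \<and>
     (\<forall>u\<in>V. \<forall>v\<in>V. (u, v) \<in> ({(s \<alpha>, t \<alpha>) | \<alpha>. \<alpha> \<in> A} \<union> {(t \<alpha>, s \<alpha>) | \<alpha>. \<alpha> \<in> A})\<^sup>*)"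

definition no_loops :: "'a set \<Rightarrow> ('a \<Rightarrow> 'v) \<Rightarrow> ('a \<Rightarrow> 'v) \<Rightarrow> bool" where
  "no_loops A s t \<longleftrightarrow> (\<forall>\<alpha>\<in>A. s \<alpha> \<noteq> t \<alpha>)"

definition no_2cycles :: "'a set \<Rightarrow> ('a \<Rightarrow> 'v) \<Rightarrow> ('a \<Rightarrow> 'v) \<Rightarrow> bool" where
  "no_2cycles A s t \<longleftrightarrow> \<not> (\<exists>\<alpha>\<in>A. \<exists>\<beta>\<in>A. s \<beta> = t \<alpha> \<and> t \<beta> = s \<alpha>)"

definition quiver_iso ::
  "'v set \<Rightarrow> 'a set \<Rightarrow> ('a \<Rightarrow> 'v) \<Rightarrow> ('a \<Rightarrow> 'v) \<Rightarrow>
   'w set \<Rightarrow> 'b set \<Rightarrow> ('b \<Rightarrow> 'w) \<Rightarrow> ('b \<Rightarrow> 'w) \<Rightarrow> bool" where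
  "quiver_iso V A s t V' A' s' t' \<longleftrightarrow>
     (\<exists>\<phi> \<psi>. bij_betw \<phi> V V' \<and> bij_betw \<psi> A A' \<and>
        (\<forall>\<alpha>\<in>A. s' (\<psi> \<alpha>) = \<phi> (s \<alpha>) \<and> t' (\<psi> \<alpha>) = \<phi> (t \<alpha>)))"

definition orbit_of :: "('a \<Rightarrow> 'a) \<Rightarrow> 'a \<Rightarrow> 'a set" where
  "orbit_of g \<alpha> = {(g ^^ n) \<alpha> | n. True}"

text \<open>Punctures: 0,1,2,3 (tetrahedron
  vertices); arcs: the six edges, i.e. 2-subsets of {0..3}. The sphere is oriented such that
  around puncture p, with the other punctures a, b, c, the arc {p,b} immediately follows the
  arc {p,a} counterclockwise iff (p,a,b,c) is an even permutation of (0,1,2,3)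
  (this is invariant under the orientation-preserving symmetries, so it is a consistent orientation).
  Evenness is tested by the sign of the Vandermonde product.\<close>

definition tet_ccw :: "nat \<Rightarrow> nat \<Rightarrow> nat \<Rightarrow> bool" where
  "tet_ccw p a b \<longleftrightarrow> p < 4 \<and> a < 4 \<and> b < 4 \<and> p \<noteq> a \<and> p \<noteq> b \<and> a \<noteq> b \<and>
     (let c = 6 - p - a - b; x = [int p, int a, int b, int c] in
        (\<Prod>j<4. \<Prod>i<j. (x ! j - x ! i)) > 0)"

definition tet_vertices :: "nat set set" where
  "tet_vertices = {e. e \<subseteq> {0..3} \<and> card e = 2}"

text \<open>An arrow (p, a, b) is the arrow at puncture p from arc {p,a} to arc {p,b}.\<close>
definition tet_arrows :: "(nat \<times> nat \<times> nat) set" where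
  "tet_arrows = {(p, a, b). tet_ccw p a b}"

definition tet_src :: "nat \<times> nat \<times> nat \<Rightarrow> nat set" where
  "tet_src x = (case x of (p, a, b) \<Rightarrow> {p, a})"

definition tet_tgt :: "nat \<times> nat \<times> nat \<Rightarrow> nat set" where
  "tet_tgt x = (case x of (p, a, b) \<Rightarrow> {p, b})"

end

theory Submission
  imports Defs
begin

lemma card2_eq: "finite S \<Longrightarrow> card S = 2 \<Longrightarrow> a \<in> S \<Longrightarrow> b \<in> S \<Longrightarrow> a \<noteq> b \<Longrightarrow> S = {a, b}"
  by (metis card_2_iff doubleton_eq_iff insertE singletonD)

definition tF :: "nat \<times> nat \<times> nat \<Rightarrow> nat \<times> nat \<times> nat" where
  "tF m = (case m of (p,a,b) \<Rightarrow> (b,p,a))"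
definition tG :: "nat \<times> nat \<times> nat \<Rightarrow> nat \<times> nat \<times> nat" where
  "tG m = (case m of (p,a,b) \<Rightarrow> (p,b,6-p-a-b))"

lemma tet_arrows_eq: "tet_arrows = {(0,1,2),(2,0,1),(0,2,3),(1,2,0),(3,0,2),(2,1,3),(0,3,1),(2,3,0),(3,2,1),(1,0,3),(1,3,2),(3,1,0)}"
proof -
  have *: "tet_ccw p a b \<longleftrightarrow> (p,a,b) \<in> {(0,1,2),(2,0,1),(0,2,3),(1,2,0),(3,0,2),(2,1,3),(0,3,1),(2,3,0),(3,2,1),(1,0,3),(1,3,2),(3,1,0)}" for p a b
  proof (cases "p < 4 \<and> a < 4 \<and> b < 4")
    case True
    then have "p = 0 \<or> p = 1 \<or> p = 2 \<or> p = 3" "a = 0 \<or> a = 1 \<or> a = 2 \<or> a = 3" "b = 0 \<or> b = 1 \<or> b = 2 \<or> b = 3" by auto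
    then show ?thesis by (elim disjE) (simp_all add: tet_ccw_def lessThan_nat_numeral)
  next
    case False then show ?thesis by (auto simp: tet_ccw_def)
  qed
  show ?thesis unfolding tet_arrows_def
  proof (rule set_eqI)
    fix x :: "nat \<times> nat \<times> nat" obtain p a b where x: "x = (p,a,b)" by (cases x) auto
    show "x \<in> {(p, a, b). tet_ccw p a b} \<longleftrightarrow> x \<in> {(0,1,2),(2,0,1),(0,2,3),(1,2,0),(3,0,2),(2,1,3),(0,3,1),(2,3,0),(3,2,1),(1,0,3),(1,3,2),(3,1,0)}"
      unfolding x using *[of p a b] by (simp only: mem_Collect_eq case_prod_conv)
  qed
qed

lemma pair_in: assumes "(x::nat) < y" "y \<le> 3" shows "{x,y} \<in> {{0,1},{0,2},{0,3},{1,2},{1,3},{2,3}}"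
proof -
  have "x = 0 \<or> x = 1 \<or> x = 2" "y = 1 \<or> y = 2 \<or> y = 3" using assms by auto
  thus ?thesis using assms(1) by (elim disjE) auto
qed
lemma tet_vertices_eq: "tet_vertices = {{0,1},{0,2},{0,3},{1,2},{1,3},{2,3}}"
proof -
  have *: "e \<subseteq> {0..3} \<and> card e = 2 \<longleftrightarrow> e \<in> {{0,1},{0,2},{0,3},{1,2},{1,3},{2,3}}" for e :: "nat set"
  proof
    assume h: "e \<subseteq> {0..3} \<and> card e = 2"
    then obtain x y where e: "e = {x,y}" "x \<noteq> y" by (auto simp: card_2_iff)
    with h have "x \<le> 3" "y \<le> 3" by auto
    show "e \<in> {{0,1},{0,2},{0,3},{1,2},{1,3},{2,3}}"
    proof (cases "x < y")
      case True then show ?thesis using pair_in[of x y] e \<open>y \<le> 3\<close> by simp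
    next
      case False then have "y < x" using e by simp
      then show ?thesis using pair_in[of y x] e \<open>x \<le> 3\<close> by (simp add: insert_commute)
    qed
  next
    assume "e \<in> {{0,1},{0,2},{0,3},{1,2},{1,3},{2,3}}"
    then show "e \<subseteq> {0..3} \<and> card e = 2" by (elim insertE) auto
  qed
  show ?thesis unfolding tet_vertices_def
  proof (rule set_eqI)
    fix e :: "nat set" show "e \<in> {e. e \<subseteq> {0..3} \<and> card e = 2} \<longleftrightarrow> e \<in> {{0,1},{0,2},{0,3},{1,2},{1,3},{2,3}}"
      using *[of e] by (simp only: mem_Collect_eq)
  qed
qed

definition Ml :: "(nat \<times> nat \<times> nat) list" where
  "Ml = [(0,1,2),(2,0,1),(0,2,3),(1,2,0),(3,0,2),(2,1,3),(0,3,1),(2,3,0),(3,2,1),(1,0,3),(1,3,2),(3,1,0)]"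
lemma tet_arrows_Ml: "tet_arrows = set Ml"
  by (simp add: tet_arrows_eq Ml_def)
lemma tet_arrows_cases: "m \<in> tet_arrows \<Longrightarrow> m = (0,1,2) \<or> m = (2,0,1) \<or> m = (0,2,3) \<or> m = (1,2,0) \<or> m = (3,0,2) \<or> m = (2,1,3) \<or> m = (0,3,1) \<or> m = (2,3,0) \<or> m = (3,2,1) \<or> m = (1,0,3) \<or> m = (1,3,2) \<or> m = (3,1,0)"
  by (simp add: tet_arrows_eq)
lemma inMl: "m \<in> tet_arrows \<Longrightarrow> m \<in> set Ml" by (simp only: tet_arrows_Ml)
lemma tFc: "\<forall>m\<in>set Ml. tF m \<in> set Ml" by code_simp
lemma tGc: "\<forall>m\<in>set Ml. tG m \<in> set Ml" by code_simp
lemma tF_M: "m \<in> tet_arrows \<Longrightarrow> tF m \<in> tet_arrows"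
  using tFc inMl tet_arrows_Ml by blast
lemma tG_M: "m \<in> tet_arrows \<Longrightarrow> tG m \<in> tet_arrows"
  using tGc inMl tet_arrows_Ml by blast
lemma M1c: "\<forall>m\<in>set Ml. tet_src m = tet_tgt (tF (tF m))" by code_simp
lemma M1: "m \<in> tet_arrows \<Longrightarrow> tet_src m = tet_tgt (tF (tF m))"
  using M1c inMl by blast
lemma M2c: "\<forall>m\<in>set Ml. tet_tgt (tF (tF (tG m))) = tet_tgt m" by code_simp
lemma M2: "m \<in> tet_arrows \<Longrightarrow> tet_tgt (tF (tF (tG m))) = tet_tgt m"
  using M2c inMl by blast
lemma M3c: "\<forall>m\<in>set Ml. \<forall>m'\<in>set Ml. tet_tgt m' = tet_tgt m \<longrightarrow> m' = m \<or> m' = tF (tF (tG m))"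
  by code_simp
lemma M3: "m \<in> tet_arrows \<Longrightarrow> m' \<in> tet_arrows \<Longrightarrow> tet_tgt m' = tet_tgt m \<Longrightarrow> m' = m \<or> m' = tF (tF (tG m))"
  using M3c inMl by blast
lemma M4c: "\<forall>m\<in>set Ml. tet_tgt m \<in> {{0,1},{0,2},{0,3},{1,2},{1,3},{2,3}}" by code_simp
lemma M4: assumes "m \<in> tet_arrows" shows "tet_tgt m \<in> tet_vertices"
proof -
  have "tet_tgt m \<in> {{0,1},{0,2},{0,3},{1,2},{1,3},{2,3}}" using bspec[OF M4c inMl[OF assms]] .
  thus ?thesis by (simp only: tet_vertices_eq)
qed
lemma M4c': "\<forall>e\<in>{{0,1},{0,2},{0,3},{1,2},{1,3},{2,3}}. \<exists>m\<in>set Ml. tet_tgt m = e" by code_simp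
lemma M4b: assumes "e \<in> tet_vertices" shows "\<exists>m\<in>tet_arrows. tet_tgt m = e"
proof -
  have "e \<in> {{0,1},{0,2},{0,3},{1,2},{1,3},{2,3}}" using assms by (simp only: tet_vertices_eq)
  from bspec[OF M4c' this] show ?thesis by (simp only: tet_arrows_Ml)
qed
lemma M5c: "\<forall>m\<in>set Ml. \<forall>m'\<in>set Ml. tet_src m' = tet_src m \<longrightarrow> m' = m \<or> m' = tG (tF (tF m))"
  by code_simp
lemma M5: "m \<in> tet_arrows \<Longrightarrow> m' \<in> tet_arrows \<Longrightarrow> tet_src m' = tet_src m \<Longrightarrow> m' = m \<or> m' = tG (tF (tF m))"
  using M5c inMl by blast
lemma M6c: "\<forall>m\<in>set Ml. card {fst m, fst (tG (tF (tF m))), fst (tF m), fst (tF (tG (tF (tF m))))} = 4"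
  by code_simp
lemma M6: "m \<in> tet_arrows \<Longrightarrow> card {fst m, fst (tG (tF (tF m))), fst (tF m), fst (tF (tG (tF (tF m))))} = 4"
  using M6c inMl by blast
lemma M7c: "\<forall>m\<in>set Ml. {m, tG m, tG (tG m)} = set (filter (\<lambda>m'. fst m' = fst m) Ml)"
  by code_simp
lemma M7: assumes "m \<in> tet_arrows" shows "{m, tG m, tG (tG m)} = {m' \<in> tet_arrows. fst m' = fst m}"
proof -
  have "{m, tG m, tG (tG m)} = set (filter (\<lambda>m'. fst m' = fst m) Ml)" using bspec[OF M7c inMl[OF assms]] .
  also have "\<dots> = {m' \<in> tet_arrows. fst m' = fst m}" by (simp only: set_filter tet_arrows_Ml)
  finally show ?thesis .
qed
lemma M8c: "card (fst ` set Ml) = 4" by code_simp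
lemma M8: "card (fst ` tet_arrows) = 4"
  using M8c by (simp only: tet_arrows_Ml)

lemma card_tv: "card tet_vertices = 6"
proof -
  have "card {{0,1},{0,2},{0,3},{1,2},{1,3},{2,3}::nat set} = 6" by code_simp
  thus ?thesis by (simp only: tet_vertices_eq)
qed

locale Q3 =
  fixes V :: "'v set" and A :: "'a set" and s t :: "'a \<Rightarrow> 'v" and f g :: "'a \<Rightarrow> 'a" and a0 :: 'a
  assumes finV: "finite V" and finA: "finite A"
    and quiv: "quiver V A s t"
    and conn: "quiver_connected V A s t"
    and noloop: "no_loops A s t"
    and outc: "\<forall>v\<in>V. card {\<alpha>\<in>A. s \<alpha> = v} = 2"
    and inc: "\<forall>v\<in>V. card {\<alpha>\<in>A. t \<alpha> = v} = 2"
    and bf: "bij_betw f A A" and bg: "bij_betw g A A"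
    and fg: "\<forall>\<alpha>\<in>A. {f \<alpha>, g \<alpha>} = {\<beta>\<in>A. s \<beta> = t \<alpha>}"
    and f3: "\<forall>\<alpha>\<in>A. f (f (f \<alpha>)) = \<alpha>"
    and g3: "\<forall>\<alpha>\<in>A. g (g (g \<alpha>)) = \<alpha>"
    and a0: "a0 \<in> A"
begin

lemma fA[simp]: "b \<in> A \<Longrightarrow> f b \<in> A" using bf by (auto simp: bij_betw_def)
lemma gA[simp]: "b \<in> A \<Longrightarrow> g b \<in> A" using bg by (auto simp: bij_betw_def)
lemma a0A[simp]: "a0 \<in> A" by (rule a0)
lemma sV: "b \<in> A \<Longrightarrow> s b \<in> V" using quiv by (auto simp: quiver_def)
lemma tV: "b \<in> A \<Longrightarrow> t b \<in> V" using quiv by (auto simp: quiver_def)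
lemma s_f: "b \<in> A \<Longrightarrow> s (f b) = t b" using fg by blast
lemma s_g: "b \<in> A \<Longrightarrow> s (g b) = t b" using fg by blast
lemma f3'[simp]: "b \<in> A \<Longrightarrow> f (f (f b)) = b" using f3 by blast
lemma g3'[simp]: "b \<in> A \<Longrightarrow> g (g (g b)) = b" using g3 by blast
lemma out: "b \<in> A \<Longrightarrow> c \<in> A \<Longrightarrow> s c = t b \<Longrightarrow> c = f b \<or> c = g b"
  using fg by blast
lemma fg_ne: assumes "b \<in> A" shows "f b \<noteq> g b"
proof
  assume h: "f b = g b"
  have e0: "{f b, g b} = {c\<in>A. s c = t b}" using fg assms by blast
  have e: "{c\<in>A. s c = t b} = {g b}" using e0 h by simp
  have "card {c\<in>A. s c = t b} = 2" using outc tV[OF assms] by blast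
  with e show False by simp
qed
lemma fp_f: assumes "b \<in> A" shows "f b \<noteq> b"
  using s_f[OF assms] noloop assms by (auto simp: no_loops_def)
lemma fp_ff: assumes "b \<in> A" shows "f (f b) \<noteq> b"
proof
  assume "f (f b) = b"
  hence "f (f (f b)) = f b" by simp
  thus False using fp_f[OF assms] assms by simp
qed
lemma R1: assumes b: "b \<in> A" shows "g (g (f b)) = f (f (g b))"
proof -
  define c where "c = f (f (g b))"
  have cA: "c \<in> A" using b by (simp add: c_def)
  have fc: "f c = g b" using b by (simp add: c_def)
  have tc: "t c = t b" using s_f[OF cA] s_g[OF b] fc by simp
  have "g c = f c \<or> g c = g b \<or> g c = f b"
    using out[OF b, of "g c"] s_g[OF cA] tc cA by auto
  hence "g c = f b" using fg_ne[OF cA] fc by auto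
  hence "g (g (g c)) = g (g (f b))" by simp
  thus ?thesis using cA by (simp add: c_def)
qed
lemma R2: assumes b: "b \<in> A" shows "g (f (f b)) = f (g (g b))"
proof -
  have "f (f (g (f (f b)))) = g (g (f (f (f b))))" using R1[of "f (f b)"] b by simp
  also have "\<dots> = g (g b)" using b by simp
  finally have "f (f (f (g (f (f b))))) = f (g (g b))" by simp
  thus ?thesis using b by simp
qed
lemma R3: assumes b: "b \<in> A" shows "g (f (g b)) = f (g (f b))"
proof -
  have "f (g (f b)) = g (f (f (g (g (f b)))))" using R2[of "g (g (f b))"] b by simp
  also have "\<dots> = g (f (f (f (f (g b)))))" using R1[OF b] by simp
  also have "\<dots> = g (f (g b))" using b by simp
  finally show ?thesis by simp
qed
lemmas nf = f3' g3' R1 R2 R3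

lemma fp_x: assumes "b \<in> A" shows "f (f (g b)) \<noteq> b"
proof
  assume "f (f (g b)) = b"
  hence "f (f (f (g b))) = f b" by simp
  thus False using fg_ne[OF assms] assms by simp
qed
lemma fpw0: assumes "b \<in> A" shows "f b \<noteq> b"
  using fp_f[OF assms] .
lemma fpw1: assumes "b \<in> A" shows "g b \<noteq> b"
proof
  assume h: "g b = b"
  have 1: "f ((f (f (g (f b))))) = f (f (g (f ((g b)))))" using assms by (simp add: nf)
  have eq: "f ((f (f (g (f b))))) = f (f (g (f b)))" using 1 h by simp
  have "f (f (g (f b))) \<in> A" using assms by simp
  with eq show False using fp_f by blast
qed
lemma fpw2: assumes "b \<in> A" shows "f (f b) \<noteq> b"
  using fp_ff[OF assms] .
lemma fpw3: assumes "b \<in> A" shows "f (g b) \<noteq> b"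
proof
  assume h: "f (g b) = b"
  have 1: "f (f ((g (g b)))) = g (g ((f (g b))))" using assms by (simp add: nf)
  have eq: "f (f ((g (g b)))) = g (g b)" using 1 h by simp
  have "g (g b) \<in> A" using assms by simp
  with eq show False using fp_ff by blast
qed
lemma fpw4: assumes "b \<in> A" shows "g (f b) \<noteq> b"
proof
  assume h: "g (f b) = b"
  have 1: "f (f ((g b))) = g ((g (f b)))" using assms by (simp add: nf)
  have eq: "f (f ((g b))) = g b" using 1 h by simp
  have "g b \<in> A" using assms by simp
  with eq show False using fp_ff by blast
qed
lemma fpw5: assumes "b \<in> A" shows "g (g b) \<noteq> b"
proof
  assume h: "g (g b) = b"
  have 1: "f (f ((f (f (g (f b)))))) = f (f (g (f ((g (g b))))))" using assms by (simp add: nf)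
  have eq: "f (f ((f (f (g (f b)))))) = f (f (g (f b)))" using 1 h by simp
  have "f (f (g (f b))) \<in> A" using assms by simp
  with eq show False using fp_ff by blast
qed
lemma fpw6: assumes "b \<in> A" shows "f (f (g b)) \<noteq> b"
  using fp_x[OF assms] .
lemma fpw7: assumes "b \<in> A" shows "f (g (f b)) \<noteq> b"
proof
  assume h: "f (g (f b)) = b"
  have 1: "f (f (g ((f b)))) = f ((f (g (f b))))" using assms by (simp add: nf)
  have eq: "f (f (g ((f b)))) = f b" using 1 h by simp
  have "f b \<in> A" using assms by simp
  with eq show False using fp_x by blast
qed
lemma fpw8: assumes "b \<in> A" shows "f (g (g b)) \<noteq> b"
proof
  assume h: "f (g (g b)) = b"
  have 1: "f (f (g ((f (f b))))) = f (f ((f (g (g b)))))" using assms by (simp add: nf)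
  have eq: "f (f (g ((f (f b))))) = f (f b)" using 1 h by simp
  have "f (f b) \<in> A" using assms by simp
  with eq show False using fp_x by blast
qed
lemma fpw9: assumes "b \<in> A" shows "f (f (g (f b))) \<noteq> b"
proof
  assume h: "f (f (g (f b))) = b"
  have 1: "f ((g (g b))) = g (g ((f (f (g (f b))))))" using assms by (simp add: nf)
  have eq: "f ((g (g b))) = g (g b)" using 1 h by simp
  have "g (g b) \<in> A" using assms by simp
  with eq show False using fp_f by blast
qed
lemma fpw10: assumes "b \<in> A" shows "f (f (g (g b))) \<noteq> b"
proof
  assume h: "f (f (g (g b))) = b"
  have 1: "f ((g b)) = g ((f (f (g (g b)))))" using assms by (simp add: nf)
  have eq: "f ((g b)) = g b" using 1 h by simp
  have "g b \<in> A" using assms by simp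
  with eq show False using fp_f by blast
qed
lemmas fpw = fpw0 fpw1 fpw2 fpw3 fpw4 fpw5 fpw6 fpw7 fpw8 fpw9 fpw10
definition "Mlist = [(0,1,2), (2,0,1), (0,2,3), (1,2,0), (3,0,2), (2,1,3), (0,3,1), (2,3,0), (3,2,1), (1,0,3), (1,3,2), (3,1,0)]"
definition Phi :: "nat \<times> nat \<times> nat \<Rightarrow> 'a" where
  "Phi m = (if m = (0,1,2) then a0 else if m = (2,0,1) then f a0 else if m = (0,2,3) then g a0 else if m = (1,2,0) then f (f a0) else if m = (3,0,2) then f (g a0) else if m = (2,1,3) then g (f a0) else if m = (0,3,1) then g (g a0) else if m = (2,3,0) then f (f (g a0)) else if m = (3,2,1) then f (g (f a0)) else if m = (1,0,3) then f (g (g a0)) else if m = (1,3,2) then f (f (g (f a0))) else if m = (3,1,0) then f (f (g (g a0))) else undefined)"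
lemma mvf: "b \<in> A \<Longrightarrow> c \<in> A \<Longrightarrow> (f b = c) = (b = f (f c))" by auto
lemma mvg: "b \<in> A \<Longrightarrow> c \<in> A \<Longrightarrow> (g b = c) = (b = g (g c))" by auto

lemma Phi_eq: "m \<in> tet_arrows \<Longrightarrow> Phi (tF m) = f (Phi m) \<and> Phi (tG m) = g (Phi m)"
  by (drule tet_arrows_cases, elim disjE) (simp_all add: Phi_def tF_def tG_def nf)
lemma PhiA: "m \<in> tet_arrows \<Longrightarrow> Phi m \<in> A"
  by (drule tet_arrows_cases, elim disjE) (simp_all add: Phi_def)
lemma Phi_inj: "inj_on Phi tet_arrows"
proof (rule inj_onI)
  fix m m' assume m: "m \<in> tet_arrows" and m': "m' \<in> tet_arrows" and e: "Phi m = Phi m'"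
  show "m = m'" using tet_arrows_cases[OF m] tet_arrows_cases[OF m'] e
    by (elim disjE) (simp_all add: Phi_def nf mvf mvg fpw fpw[THEN not_sym])
qed

lemma s_tf: "b \<in> A \<Longrightarrow> s b = t (f (f b))" using s_f[of "f (f b)"] by simp
lemma t_x: "b \<in> A \<Longrightarrow> t (f (f (g b))) = t b"
  using s_f[of "f (f (g b))"] s_g[of b] by simp
lemma inn: assumes b: "b \<in> A" and c: "c \<in> A" and tc: "t c = t b"
  shows "c = b \<or> c = f (f (g b))"
proof -
  have fin: "finite {d\<in>A. t d = t b}" using finA by simp
  have cd: "card {d\<in>A. t d = t b} = 2" using inc tV[OF b] by blast
  have "{d\<in>A. t d = t b} = {b, f (f (g b))}"
    using card2_eq[OF fin cd, of b "f (f (g b))"] b t_x[OF b] fp_x[OF b] by auto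
  thus ?thesis using c tc by auto
qed

lemma Phi_f: "m \<in> tet_arrows \<Longrightarrow> Phi (tF m) = f (Phi m)" using Phi_eq by blast
lemma Phi_g: "m \<in> tet_arrows \<Longrightarrow> Phi (tG m) = g (Phi m)" using Phi_eq by blast

lemma E_f: assumes "b \<in> Phi ` tet_arrows" shows "f b \<in> Phi ` tet_arrows"
proof -
  obtain m where m: "m \<in> tet_arrows" "b = Phi m" using assms by blast
  have "f b = Phi (tF m)" using Phi_f m by simp
  thus ?thesis by (rule image_eqI[OF _ tF_M[OF m(1)]])
qed
lemma E_g: assumes "b \<in> Phi ` tet_arrows" shows "g b \<in> Phi ` tet_arrows"
proof -
  obtain m where m: "m \<in> tet_arrows" "b = Phi m" using assms by blast
  have "g b = Phi (tG m)" using Phi_g m by simp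
  thus ?thesis by (rule image_eqI[OF _ tG_M[OF m(1)]])
qed

lemma Phi_surj: "Phi ` tet_arrows = A"
proof -
  let ?E = "Phi ` tet_arrows"
  have EA: "?E \<subseteq> A" using PhiA by auto
  have key: "c \<in> ?E" if c: "c \<in> A" and tc: "t c \<in> t ` ?E" for c
  proof -
    obtain e where e: "e \<in> ?E" "t c = t e" using tc by auto
    have eA: "e \<in> A" using e EA by auto
    from inn[OF eA c e(2)] show ?thesis using e(1) E_f E_g by auto
  qed
  have m0: "(0,1,2) \<in> tet_arrows" by (simp add: tet_arrows_eq)
  have a0E: "a0 \<in> ?E" using m0 by (force simp: Phi_def)
  let ?R = "{(s \<alpha>, t \<alpha>) | \<alpha>. \<alpha> \<in> A} \<union> {(t \<alpha>, s \<alpha>) | \<alpha>. \<alpha> \<in> A}"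
  have reach: "v \<in> t ` ?E" if "(t a0, v) \<in> ?R\<^sup>*" for v
    using that
  proof (induction rule: rtrancl_induct)
    case base then show ?case using a0E by auto
  next
    case (step y z)
    from step.hyps(2) obtain \<alpha> where al: "\<alpha> \<in> A" and
      yz: "(y = s \<alpha> \<and> z = t \<alpha>) \<or> (y = t \<alpha> \<and> z = s \<alpha>)" by blast
    show ?case
    proof (cases "y = s \<alpha> \<and> z = t \<alpha>")
      case True
      have "f (f \<alpha>) \<in> ?E" using key[of "f (f \<alpha>)"] al step.IH True s_tf[OF al] by simp
      hence "f (f (f \<alpha>)) \<in> ?E" by (rule E_f)
      hence "\<alpha> \<in> ?E" using al by simp
      thus ?thesis using True by auto
    next
      case False
      hence yz2: "y = t \<alpha>" "z = s \<alpha>" using yz by auto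
      have "\<alpha> \<in> ?E" using key[OF al] step.IH yz2 by simp
      hence "f (f \<alpha>) \<in> ?E" using E_f by blast
      thus ?thesis using yz2 s_tf[OF al] by auto
    qed
  qed
  have "\<forall>v\<in>V. v \<in> t ` ?E"
    using conn reach tV[OF a0A] unfolding quiver_connected_def by blast
  hence "A \<subseteq> ?E" using key tV by blast
  thus ?thesis using EA by blast
qed

lemma Phi_bij: "bij_betw Phi tet_arrows A"
  using Phi_inj Phi_surj by (simp add: bij_betw_def)

definition psi where "psi = inv_into tet_arrows Phi"

lemma psi_bij: "bij_betw psi A tet_arrows"
  unfolding psi_def by (rule bij_betw_inv_into[OF Phi_bij])
lemma psiM: "b \<in> A \<Longrightarrow> psi b \<in> tet_arrows"
  using psi_bij by (auto simp: bij_betw_def)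
lemma Phi_psi: "b \<in> A \<Longrightarrow> Phi (psi b) = b"
  unfolding psi_def using Phi_surj by (simp add: f_inv_into_f)
lemma psi_Phi: "m \<in> tet_arrows \<Longrightarrow> psi (Phi m) = m"
  unfolding psi_def using Phi_inj by (simp add: inv_into_f_f)

lemma psi_f: "b \<in> A \<Longrightarrow> psi (f b) = tF (psi b)"
  by (metis Phi_f Phi_psi psiM psi_Phi tF_M)
lemma psi_g: "b \<in> A \<Longrightarrow> psi (g b) = tG (psi b)"
  by (metis Phi_g Phi_psi psiM psi_Phi tG_M)

definition phi where "phi v = tet_tgt (psi (SOME b. b \<in> A \<and> t b = v))"

lemma phi_t: assumes b: "b \<in> A" shows "phi (t b) = tet_tgt (psi b)"
proof -
  define c where "c = (SOME c. c \<in> A \<and> t c = t b)"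
  have c: "c \<in> A \<and> t c = t b" unfolding c_def by (rule someI[of _ b]) (simp add: b)
  have "c = b \<or> c = f (f (g b))" using inn[OF b] c by blast
  moreover have "tet_tgt (psi (f (f (g b)))) = tet_tgt (psi b)"
    using b psiM by (simp add: psi_f psi_g M2)
  ultimately show ?thesis unfolding phi_def c_def[symmetric] by auto
qed

lemma phi_s: assumes b: "b \<in> A" shows "phi (s b) = tet_src (psi b)"
  using b by (simp add: s_tf phi_t psi_f M1 psiM)

lemma has_in: "v \<in> V \<Longrightarrow> \<exists>b\<in>A. t b = v"
proof (rule ccontr)
  assume v: "v \<in> V" and "\<not> (\<exists>b\<in>A. t b = v)"
  hence e: "{b\<in>A. t b = v} = {}" by auto
  have "card {b\<in>A. t b = v} = 2" using inc v by blast
  with e show False by (metis card.empty zero_neq_numeral)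
qed

lemma phi_bij: "bij_betw phi V tet_vertices"
  unfolding bij_betw_def
proof
  show "inj_on phi V"
  proof (rule inj_onI)
    fix v w assume v: "v \<in> V" and w: "w \<in> V" and e: "phi v = phi w"
    obtain b where b: "b \<in> A" "t b = v" using has_in[OF v] by blast
    obtain c where c: "c \<in> A" "t c = w" using has_in[OF w] by blast
    have "tet_tgt (psi c) = tet_tgt (psi b)" using e phi_t[OF b(1)] phi_t[OF c(1)] b(2) c(2) by simp
    hence "psi c = psi b \<or> psi c = tF (tF (tG (psi b)))" using M3 psiM b c by blast
    hence "psi c = psi b \<or> psi c = psi (f (f (g b)))" using b by (simp add: psi_f psi_g)
    hence "c = b \<or> c = f (f (g b))" using b c
      by (metis Phi_psi fA gA)
    thus "v = w" using b c t_x by auto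
  qed
  show "phi ` V = tet_vertices"
  proof
    show "phi ` V \<subseteq> tet_vertices"
    proof
      fix x assume "x \<in> phi ` V"
      then obtain v where v: "v \<in> V" "x = phi v" by blast
      obtain b where b: "b \<in> A" "t b = v" using has_in[OF v(1)] by blast
      have "x = tet_tgt (psi b)" using v(2) b phi_t[OF b(1)] by simp
      thus "x \<in> tet_vertices" using M4[OF psiM[OF b(1)]] by simp
    qed
    show "tet_vertices \<subseteq> phi ` V"
    proof
      fix e assume "e \<in> tet_vertices"
      then obtain m where m: "m \<in> tet_arrows" "tet_tgt m = e" using M4b by blast
      have "phi (t (Phi m)) = e" using m PhiA phi_t psi_Phi by simp
      moreover have "t (Phi m) \<in> V" using tV PhiA m by simp
      ultimately show "e \<in> phi ` V" by blast
    qed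
  qed
qed

lemma orb: assumes b: "b \<in> A" shows "orbit_of g b = {b, g b, g (g b)}"
proof -
  have "(g ^^ n) b \<in> {b, g b, g (g b)}" for n
  proof (induction n)
    case 0 then show ?case by simp
  next
    case (Suc n) then show ?case using b by auto
  qed
  moreover have "b = (g ^^ 0) b" "g b = (g ^^ 1) b" "g (g b) = (g ^^ 2) b"
    by (simp_all add: numeral_2_eq_2)
  ultimately show ?thesis unfolding orbit_of_def by blast
qed

definition Gset :: "nat \<Rightarrow> (nat \<times> nat \<times> nat) set" where
  "Gset p = {m \<in> tet_arrows. fst m = p}"
definition H where "H p = Phi ` Gset p"

lemma O_eq: assumes m: "m \<in> tet_arrows" shows "orbit_of g (Phi m) = H (fst m)"
proof -
  have "orbit_of g (Phi m) = {Phi m, g (Phi m), g (g (Phi m))}" using orb PhiA m by blast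
  also have "\<dots> = Phi ` {m, tG m, tG (tG m)}" using m by (simp add: Phi_g tG_M)
  also have "\<dots> = H (fst m)" unfolding H_def Gset_def using M7[OF m] by simp
  finally show ?thesis .
qed

lemma H_inj: "inj_on H (fst ` tet_arrows)"
proof (rule inj_onI)
  fix p q assume p: "p \<in> fst ` tet_arrows" and q: "q \<in> fst ` tet_arrows" and e: "H p = H q"
  obtain m where m: "m \<in> tet_arrows" "fst m = p" using p by blast
  have "Phi m \<in> H q" using e m unfolding H_def Gset_def by auto
  then obtain m' where m': "m' \<in> tet_arrows" "fst m' = q" "Phi m' = Phi m"
    unfolding H_def Gset_def by auto
  have "m' = m" using Phi_inj m m' by (auto dest: inj_onD)
  thus "p = q" using m m' by simp
qed

lemma O_card: "card (orbit_of g ` A) = 4"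
proof -
  have "orbit_of g ` A = H ` (fst ` tet_arrows)"
  proof -
    have "orbit_of g ` A = (\<lambda>m. orbit_of g (Phi m)) ` tet_arrows"
      using Phi_surj by (metis image_image)
    also have "\<dots> = (\<lambda>m. H (fst m)) ` tet_arrows" using O_eq by (rule image_cong[OF refl])
    also have "\<dots> = H ` (fst ` tet_arrows)" by (simp add: image_image)
    finally show ?thesis .
  qed
  thus ?thesis using card_image[OF H_inj] M8 by simp
qed

lemma last: assumes a: "\<alpha> \<in> A" and a': "\<alpha>' \<in> A" and ss: "s \<alpha>' = s \<alpha>" and ne: "\<alpha>' \<noteq> \<alpha>"
  shows "card {orbit_of g \<alpha>, orbit_of g \<alpha>', orbit_of g (f \<alpha>), orbit_of g (f \<alpha>')} = 4"
proof -
  define m where "m = psi \<alpha>"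
  have m: "m \<in> tet_arrows" using psiM a m_def by simp
  have "tet_src (psi \<alpha>') = tet_src m" using phi_s a a' ss m_def by metis
  hence "psi \<alpha>' = m \<or> psi \<alpha>' = tG (tF (tF m))" using M5 m psiM a' by blast
  moreover have "psi \<alpha>' \<noteq> m" using ne a a' Phi_psi m_def by metis
  ultimately have pa': "psi \<alpha>' = tG (tF (tF m))" by simp
  define m' where "m' = tG (tF (tF m))"
  have m'M: "m' \<in> tet_arrows" using m m'_def tF_M tG_M by simp
  have A1: "\<alpha> = Phi m" using Phi_psi a m_def by simp
  have A2: "\<alpha>' = Phi m'" using Phi_psi a' pa' m'_def by metis
  have A3: "f \<alpha> = Phi (tF m)" using A1 Phi_f m by simp
  have A4: "f \<alpha>' = Phi (tF m')" using A2 Phi_f m'M by simp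
  have "{orbit_of g \<alpha>, orbit_of g \<alpha>', orbit_of g (f \<alpha>), orbit_of g (f \<alpha>')}
     = H ` {fst m, fst m', fst (tF m), fst (tF m')}"
    using A1 A2 A3 A4 O_eq m m'M tF_M by simp
  moreover have "inj_on H {fst m, fst m', fst (tF m), fst (tF m')}"
    by (rule inj_on_subset[OF H_inj]) (use m m'M tF_M in auto)
  ultimately show ?thesis using card_image M6[OF m] m'_def by metis
qed

end

theorem lemma3p11:
  fixes V :: "'v set" and A :: "'a set" and s t :: "'a \<Rightarrow> 'v" and f g :: "'a \<Rightarrow> 'a"
  assumes "finite V" and "finite A"
    and "quiver V A s t"
    and "quiver_connected V A s t"
    and "no_loops A s t" and "no_2cycles A s t"
    and "\<forall>v\<in>V. card {\<alpha>\<in>A. s \<alpha> = v} = 2"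
    and "\<forall>v\<in>V. card {\<alpha>\<in>A. t \<alpha> = v} = 2"
    and "bij_betw f A A" and "bij_betw g A A"
    and "\<forall>\<alpha>\<in>A. {f \<alpha>, g \<alpha>} = {\<beta>\<in>A. s \<beta> = t \<alpha>}"
    and "\<forall>\<alpha>\<in>A. f (f (f \<alpha>)) = \<alpha>"
    and "\<forall>\<alpha>\<in>A. g (g (g \<alpha>)) = \<alpha>"
  shows "quiver_iso V A s t tet_vertices tet_arrows tet_src tet_tgt
    \<and> card V = 6 \<and> card A = 12 \<and> card (orbit_of g ` A) = 4
    \<and> (\<forall>\<alpha>\<in>A. \<forall>\<alpha>'\<in>A. s \<alpha>' = s \<alpha> \<and> \<alpha>' \<noteq> \<alpha> \<longrightarrow>
          card {orbit_of g \<alpha>, orbit_of g \<alpha>', orbit_of g (f \<alpha>), orbit_of g (f \<alpha>')} = 4)"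
proof -
  obtain v where v: "v \<in> V" using assms(4) unfolding quiver_connected_def by blast
  have "card {\<alpha>\<in>A. t \<alpha> = v} = 2" using assms(8) v by blast
  hence "{\<alpha>\<in>A. t \<alpha> = v} \<noteq> {}" by (metis card.empty zero_neq_numeral)
  then obtain a0 where a0: "a0 \<in> A" by blast
  interpret Q: Q3 V A s t f g a0
    using assms a0 by (unfold_locales) auto
  have iso: "quiver_iso V A s t tet_vertices tet_arrows tet_src tet_tgt"
    unfolding quiver_iso_def
    using Q.phi_bij Q.psi_bij Q.phi_s Q.phi_t by metis
  have cV: "card V = 6"
    using bij_betw_same_card[OF Q.phi_bij] card_tv by simp
  have cA: "card A = 12"
    using bij_betw_same_card[OF Q.psi_bij] by (simp add: tet_arrows_eq)
  show ?thesis using iso cV cA Q.O_card Q.last by blast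
qed

end
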